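(* Let $\vec r:\mathbb{Z}\to\mathbb{R}^3$ be a discrete centroaffine space curve with constant invariants $\kappa_n=\kappa$, $\bar\kappa_n=\bar\kappa$, $\tau_n=\tau$, let $\alpha\in(0,1)$ be a constant, and define $\vec r'_n=(1-\alpha)\vec r_n+\alpha\vec r_{n+1}$ (iteration of the definite proportional division point). If $\vec r'$ is again a discrete centroaffine space curve, then its invariants satisfy $\kappa'_n=\kappa$, $\bar\kappa'_n=\bar\kappa$, $\tau'_n=\tau$ for all $n$.
   Context: A discrete centroaffine space curve is a map $\vec r:\mathbb{Z}\to\mathbb{R}^3$ with $[\vec r_{k-1},\vec r_k,\vec r_{k+1}]\ne0$ for all $k$, where $\vec r_k=\vec r(k)$, $[\cdot,\cdot,\cdot]$ is the $3\times3$ determinant and $\vec t_k=\vec r_{k+1}-\vec r_k$. With $D_k=[\vec r_{k-1},\vec r_k,\vec r_{k+1}]$: $\kappa_k=\frac{[\vec r_k,\vec r_{k+1},\vec r_{k+2}]}{D_k}$, $\bar\kappa_k=\frac{[\vec r_{k+1},\vec t_{k-1},\vec t_{k+1}]}{D_k}$, $\tau_k=\frac{[\vec t_{k-1},\vec t_k,\vec t_{k+1}]}{D_k}$ (first/second centroaffine curvature and centroaffine torsion). *)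

theory Defs
  imports "HOL-Analysis.Analysis"
begin

definition det3 :: "real^3 \<Rightarrow> real^3 \<Rightarrow> real^3 \<Rightarrow> real" where
  "det3 a b c = det (vector [a, b, c] :: real^3^3)"

definition centroaffine_curve :: "(int \<Rightarrow> real^3) \<Rightarrow> bool" where
  "centroaffine_curve r \<longleftrightarrow> (\<forall>k. det3 (r (k - 1)) (r k) (r (k + 1)) \<noteq> 0)"

definition tangent :: "(int \<Rightarrow> real^3) \<Rightarrow> int \<Rightarrow> real^3" where
  "tangent r k = r (k + 1) - r k"

definition Dc :: "(int \<Rightarrow> real^3) \<Rightarrow> int \<Rightarrow> real" where
  "Dc r k = det3 (r (k - 1)) (r k) (r (k + 1))"

definition kappa :: "(int \<Rightarrow> real^3) \<Rightarrow> int \<Rightarrow> real" where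
  "kappa r k = det3 (r k) (r (k + 1)) (r (k + 2)) / Dc r k"

definition kappa_bar :: "(int \<Rightarrow> real^3) \<Rightarrow> int \<Rightarrow> real" where
  "kappa_bar r k = det3 (r (k + 1)) (tangent r (k - 1)) (tangent r (k + 1)) / Dc r k"

definition torsion :: "(int \<Rightarrow> real^3) \<Rightarrow> int \<Rightarrow> real" where
  "torsion r k = det3 (tangent r (k - 1)) (tangent r k) (tangent r (k + 1)) / Dc r k"

end

theory Submission
  imports Defs
begin

lemma det3_exp: "det3 x y z =
   x$1*y$2*z$3 - x$1*y$3*z$2 - x$2*y$1*z$3 + x$2*y$3*z$1 + x$3*y$1*z$2 - x$3*y$2*z$1"
  unfolding det3_def det_3 by (simp add: vector_3 algebra_simps)

lemma cramer3: "det3 x y z *\<^sub>R w = det3 w y z *\<^sub>R x + det3 x w z *\<^sub>R y + det3 x y w *\<^sub>R z"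
  unfolding vec_eq_iff forall_3 det3_exp by (simp add: algebra_simps)

lemma inv3:
  fixes x y z w :: "real^3"
  assumes "w = a *\<^sub>R z + b *\<^sub>R y + c *\<^sub>R x"
  shows "det3 y z w = c * det3 x y z"
    "det3 z (y-x) (w-z) = -(b+c) * det3 x y z"
    "det3 (y-x) (z-y) (w-z) = (a-1+b+c) * det3 x y z"
  unfolding assms det3_exp by (simp_all add: algebra_simps)

lemma rec_from_inv:
  fixes r :: "int \<Rightarrow> real^3"
  assumes D: "Dc r k \<noteq> 0"
    and k1: "kappa r k = \<kappa>" and k2: "kappa_bar r k = \<kappa>b" and t: "torsion r k = \<tau>"
  shows "r (k+2) = (\<tau>+1+\<kappa>b) *\<^sub>R r (k+1) + (-\<kappa>b-\<kappa>) *\<^sub>R r k + \<kappa> *\<^sub>R r (k-1)"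
proof -
  define x y z w where "x = r (k-1)" "y = r k" "z = r (k+1)" "w = r (k+2)"
  define d where "d = det3 x y z"
  have d0: "d \<noteq> 0" using D unfolding Dc_def d_def x_y_z_w_def .
  define a b c where "a = det3 x y w / d" "b = det3 x w z / d" "c = det3 w y z / d"
  have wrep: "w = a *\<^sub>R z + b *\<^sub>R y + c *\<^sub>R x"
  proof -
    have "d *\<^sub>R w = (d*c) *\<^sub>R x + (d*b) *\<^sub>R y + (d*a) *\<^sub>R z"
      using cramer3[of x y z w] d0 unfolding a_b_c_def d_def by simp
    hence "d *\<^sub>R w = d *\<^sub>R (a *\<^sub>R z + b *\<^sub>R y + c *\<^sub>R x)"
      by (simp add: scaleR_add_right algebra_simps)
    thus ?thesis using d0 by simp
  qed
  note I = inv3[OF wrep]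
  have tg: "tangent r (k-1) = y - x" "tangent r k = z - y" "tangent r (k+1) = w - z"
    unfolding tangent_def x_y_z_w_def by (simp_all add: add.assoc)
  have "kappa r k = det3 y z w / d"
    unfolding kappa_def Dc_def d_def x_y_z_w_def by simp
  hence c: "c = \<kappa>" using I(1) d0 k1 unfolding d_def by simp
  have "kappa_bar r k = det3 z (y-x) (w-z) / d"
    unfolding kappa_bar_def tg unfolding Dc_def d_def x_y_z_w_def by simp
  hence b: "-(b+c) = \<kappa>b" using I(2) d0 k2 unfolding d_def by simp
  have "torsion r k = det3 (y-x) (z-y) (w-z) / d"
    unfolding torsion_def tg unfolding Dc_def d_def x_y_z_w_def by simp
  hence a: "a-1+b+c = \<tau>" using I(3) d0 t unfolding d_def by simp
  have "a = \<tau>+1+\<kappa>b" "b = -\<kappa>b-\<kappa>" using a b c by linarith+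
  with c wrep show ?thesis unfolding x_y_z_w_def by simp
qed

lemma inv_from_rec:
  fixes s :: "int \<Rightarrow> real^3"
  assumes D: "Dc s k \<noteq> 0"
    and R: "s (k+2) = A *\<^sub>R s (k+1) + B *\<^sub>R s k + C *\<^sub>R s (k-1)"
  shows "kappa s k = C" "kappa_bar s k = -(B+C)" "torsion s k = A-1+B+C"
proof -
  define x y z w where "x = s (k-1)" "y = s k" "z = s (k+1)" "w = s (k+2)"
  have wrep: "w = A *\<^sub>R z + B *\<^sub>R y + C *\<^sub>R x" using R unfolding x_y_z_w_def .
  note I = inv3[OF wrep]
  have d0: "det3 x y z \<noteq> 0" using D unfolding Dc_def x_y_z_w_def .
  have tg: "tangent s (k-1) = y - x" "tangent s k = z - y" "tangent s (k+1) = w - z"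
    unfolding tangent_def x_y_z_w_def by (simp_all add: add.assoc)
  show "kappa s k = C" unfolding kappa_def Dc_def using I(1) d0
    unfolding x_y_z_w_def by simp
  show "kappa_bar s k = -(B+C)" unfolding kappa_bar_def tg Dc_def using I(2) d0
    unfolding x_y_z_w_def by simp
  show "torsion s k = A-1+B+C" unfolding torsion_def tg Dc_def using I(3) d0
    unfolding x_y_z_w_def by simp
qed

theorem proposition7p2:
  fixes r :: "int \<Rightarrow> real^3" and \<kappa> \<kappa>b \<tau> \<alpha> :: real
  assumes "centroaffine_curve r"
    and "\<And>n. kappa r n = \<kappa>"
    and "\<And>n. kappa_bar r n = \<kappa>b"
    and "\<And>n. torsion r n = \<tau>"
    and "0 < \<alpha>" and "\<alpha> < 1"
    and "centroaffine_curve (\<lambda>n. (1 - \<alpha>) *\<^sub>R r n + \<alpha> *\<^sub>R r (n + 1))"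
  shows "\<forall>n. kappa (\<lambda>n. (1 - \<alpha>) *\<^sub>R r n + \<alpha> *\<^sub>R r (n + 1)) n = \<kappa>
            \<and> kappa_bar (\<lambda>n. (1 - \<alpha>) *\<^sub>R r n + \<alpha> *\<^sub>R r (n + 1)) n = \<kappa>b
            \<and> torsion (\<lambda>n. (1 - \<alpha>) *\<^sub>R r n + \<alpha> *\<^sub>R r (n + 1)) n = \<tau>"
proof
  fix n
  define s where "s = (\<lambda>n. (1 - \<alpha>) *\<^sub>R r n + \<alpha> *\<^sub>R r (n + 1))"
  define A B where "A = \<tau>+1+\<kappa>b" "B = -\<kappa>b-\<kappa>"
  have rec: "r (k+2) = A *\<^sub>R r (k+1) + B *\<^sub>R r k + \<kappa> *\<^sub>R r (k-1)" for k
    using rec_from_inv[of r k \<kappa> \<kappa>b \<tau>] assms(1-4) unfolding A_B_def centroaffine_curve_def Dc_def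
    by blast
  have r1: "r (n+2) = A *\<^sub>R r (n+1) + B *\<^sub>R r n + \<kappa> *\<^sub>R r (n-1)" by (rule rec)
  have r2: "r (n+1+2) = A *\<^sub>R r (n+1+1) + B *\<^sub>R r (n+1) + \<kappa> *\<^sub>R r (n+1-1)" by (rule rec)
  have R: "s (n+2) = A *\<^sub>R s (n+1) + B *\<^sub>R s n + \<kappa> *\<^sub>R s (n-1)"
  proof -
    have e: "n+2+1 = n+1+2" "n+1+1 = n+2" "n+1-1 = n" "n-1+1 = n" by simp_all
    show ?thesis unfolding s_def e r2 r1 by (simp add: algebra_simps)
  qed
  have D: "Dc s n \<noteq> 0" using assms(7) unfolding centroaffine_curve_def Dc_def s_def by blast
  note J = inv_from_rec[OF D R]
  show "kappa s n = \<kappa> \<and> kappa_bar s n = \<kappa>b \<and> torsion s n = \<tau>"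
    using J unfolding A_B_def by simp
qed

end
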